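(* Let $(\mathcal{A},\{\eta_n\}_{n\ge1})$ be an $NS_\infty$-algebra. Then $(\mathcal{A},\{\overline{\eta}_n\}_{n\ge1})$ is an $A_\infty$-algebra, where $\overline{\eta}_1(a)=\eta_1([1];a)$ and $\overline{\eta}_n(a_1,\dots,a_n)=\sum_{j=1}^{n+1}\eta_n([j];a_1,\dots,a_n)$ for $n\ge2$.
   Context: Over a field of characteristic $0$. An $A_\infty$-algebra: graded vector space $\mathcal{A}$ with degree $n-2$ maps $\mu_n:\mathcal{A}^{\otimes n}\to\mathcal{A}$ such that for all $k\ge1$ and homogeneous $a_1,\dots,a_k$: $\sum_{m+n=k+1}\sum_{i=1}^m(-1)^{i(n+1)+n(|a_1|+\cdots+|a_{i-1}|)}\mu_m(a_1,\dots,a_{i-1},\mu_n(a_i,\dots,a_{i+n-1}),a_{i+n},\dots,a_k)=0$. Let $C_n=\{[1],\dots,[n]\}$ (formal symbols). $\mathcal{O}(1)=\mathrm{Hom}(\mathbf{k}[C_1]\otimes\mathcal{A},\mathcal{A})$, $\mathcal{O}(n)=\mathrm{Hom}(\mathbf{k}[C_{n+1}]\otimes\mathcal{A}^{\otimes n},\mathcal{A})$ for $n\ge2$ (graded maps); call $C_1$, resp. $C_{n+1}$, the index set of $\mathcal{O}(n)$. For $g\in\mathcal{O}(n)$ write $g([*];-)$ for the sum of $g([j];-)$ over its index set, and set $g([j];-)=0$ if $[j]$ is not in its index set. For $f\in\mathcal{O}(m)$ of degree $m-2$, $g\in\mathcal{O}(n)$ of degree $n-2$, $1\le i\le m$, homogeneous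 $a_1,\dots,a_{m+n-1}$, put $\varepsilon=(-1)^{n(|a_1|+\cdots+|a_{i-1}|)}$ and $\bar g_\ast=g([*];a_i,\dots,a_{i+n-1})$; the (graded) partial composition $f\circ_ig\in\mathcal{O}(m+n-1)$ is $\varepsilon$ times: $f([r];a_1,\dots,a_{i-1},\bar g_*,a_{i+n},\dots)$ if $1\le r\le i-1$; $f([i];a_1,\dots,a_{i-1},g([r-i+1];a_i,\dots,a_{i+n-1}),a_{i+n},\dots)$ if $i\le r\le i+n-1$; $f([r-n+1];\dots,\bar g_*,\dots)$ if $i+n\le r\le m+n-1$; $f([i];\dots,g([n+1];a_i,\dots,a_{i+n-1}),\dots)+f([m+1];\dots,\bar g_*,\dots)$ if $r=m+n$ (for $[r]$ in the index set of $\mathcal{O}(m+n-1)$). An $NS_\infty$-algebra is $(\mathcal{A},\{\eta_n\}_{n\ge1})$ with $\eta_n\in\mathcal{O}(n)$ of degree $n-2$ such that for every $k\ge1$, every $[r]$ in the index set of $\mathcal{O}(k)$ and homogeneous $a_1,\dots,a_k$: $\sum_{m+n=k+1}\sum_{i=1}^m(-1)^{i(n+1)}(\eta_m\circ_i\eta_n)([r];a_1,\dots,a_k)=0$. *)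

theory Defs
  imports Main "HOL.Modules"
begin

definition sgnv :: "int \<Rightarrow> 'v::ab_group_add \<Rightarrow> 'v" where
  "sgnv e x = (if even e then x else - x)"

definition graded_vs :: "('k::field_char_0 \<Rightarrow> 'v::ab_group_add \<Rightarrow> 'v) \<Rightarrow> (int \<Rightarrow> 'v set) \<Rightarrow> bool" where
  "graded_vs scale G \<longleftrightarrow> module scale
     \<and> (\<forall>d. 0 \<in> G d \<and> (\<forall>x\<in>G d. \<forall>y\<in>G d. x + y \<in> G d) \<and> (\<forall>c. \<forall>x\<in>G d. scale c x \<in> G d))
     \<and> (\<forall>v. \<exists>D x. finite D \<and> (\<forall>d\<in>D. x d \<in> G d) \<and> v = (\<Sum>d\<in>D. x d))
     \<and> (\<forall>D x. finite D \<and> (\<forall>d\<in>D. x d \<in> G d) \<and> (\<Sum>d\<in>D. x d) = 0 \<longrightarrow> (\<forall>d\<in>D. x d = 0))"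

(* f, viewed on lists of length n, is linear in each of its n arguments
   (i.e. a linear map on A^{\<otimes> n}). *)
definition multilin :: "('k::field_char_0 \<Rightarrow> 'v::ab_group_add \<Rightarrow> 'v) \<Rightarrow> nat \<Rightarrow> ('v list \<Rightarrow> 'v) \<Rightarrow> bool" where
  "multilin scale n f \<longleftrightarrow> (\<forall>as p c x y. length as = n \<and> p < n \<longrightarrow>
      f (as[p := scale c x + y]) = scale c (f (as[p := x])) + f (as[p := y]))"

definition homog :: "(int \<Rightarrow> 'v set) \<Rightarrow> 'v list \<Rightarrow> int list \<Rightarrow> bool" where
  "homog G as ds \<longleftrightarrow> length ds = length as \<and> (\<forall>i<length as. as ! i \<in> G (ds ! i))"

definition graded_map :: "('k::field_char_0 \<Rightarrow> 'v::ab_group_add \<Rightarrow> 'v) \<Rightarrow> (int \<Rightarrow> 'v set) \<Rightarrow> nat \<Rightarrow> int \<Rightarrow> ('v list \<Rightarrow> 'v) \<Rightarrow> bool" where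
  "graded_map scale G n s f \<longleftrightarrow> multilin scale n f
     \<and> (\<forall>as ds. length as = n \<and> homog G as ds \<longrightarrow> f as \<in> G (sum_list ds + s))"

(* replace the block of n entries starting at (1-based) position i by x *)
definition ins_at :: "'v list \<Rightarrow> nat \<Rightarrow> nat \<Rightarrow> 'v \<Rightarrow> 'v list" where
  "ins_at as i n x = take (i - 1) as @ [x] @ drop (i - 1 + n) as"

definition block :: "'v list \<Rightarrow> nat \<Rightarrow> nat \<Rightarrow> 'v list" where
  "block as i n = take n (drop (i - 1) as)"

definition Ainf_algebra :: "('k::field_char_0 \<Rightarrow> 'v::ab_group_add \<Rightarrow> 'v) \<Rightarrow> (int \<Rightarrow> 'v set) \<Rightarrow> (nat \<Rightarrow> 'v list \<Rightarrow> 'v) \<Rightarrow> bool" where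
  "Ainf_algebra scale G \<mu> \<longleftrightarrow> graded_vs scale G
     \<and> (\<forall>n\<ge>1. graded_map scale G n (int n - 2) (\<mu> n))
     \<and> (\<forall>k\<ge>1. \<forall>as ds. length as = k \<and> homog G as ds \<longrightarrow>
          (\<Sum>n\<in>{1..k}. \<Sum>i\<in>{1..k + 1 - n}.
              sgnv (int i * (int n + 1) + int n * sum_list (take (i - 1) ds))
                (\<mu> (k + 1 - n) (ins_at as i n (\<mu> n (block as i n))))) = 0)"

(* index set of O(n): C_1 for n = 1, C_{n+1} for n \<ge> 2 *)
definition idxset :: "nat \<Rightarrow> nat set" where
  "idxset n = (if n = 1 then {1} else {1..n + 1})"

(* g([j];-) with the convention that it is 0 when [j] is not in the index set of O(n) *)
definition ev :: "nat \<Rightarrow> (nat \<Rightarrow> 'v list \<Rightarrow> 'v) \<Rightarrow> nat \<Rightarrow> 'v list \<Rightarrow> 'v::ab_group_add" where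
  "ev n g j as = (if j \<in> idxset n then g j as else 0)"

(* graded partial composition (f \<circ>_i g)([r]; as), f \<in> O(m), g \<in> O(n), ds the degrees of as *)
definition pcomp :: "nat \<Rightarrow> (nat \<Rightarrow> 'v list \<Rightarrow> 'v) \<Rightarrow> nat \<Rightarrow> (nat \<Rightarrow> 'v list \<Rightarrow> 'v)
     \<Rightarrow> nat \<Rightarrow> nat \<Rightarrow> 'v list \<Rightarrow> int list \<Rightarrow> 'v::ab_group_add" where
  "pcomp m f n g i r as ds =
     (let gbar = (\<Sum>j\<in>idxset n. ev n g j (block as i n));
          ins = ins_at as i n
      in sgnv (int n * sum_list (take (i - 1) ds))
        (if 1 \<le> r \<and> r \<le> i - 1 then ev m f r (ins gbar)
         else if i \<le> r \<and> r \<le> i + n - 1 then ev m f i (ins (ev n g (r - i + 1) (block as i n)))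
         else if i + n \<le> r \<and> r \<le> m + n - 1 then ev m f (r - n + 1) (ins gbar)
         else if r = m + n then ev m f i (ins (ev n g (n + 1) (block as i n))) + ev m f (m + 1) (ins gbar)
         else 0))"

(* NS_\<infinity>-algebra with \<eta> n \<in> O(n), \<eta> n j = \<eta>_n([j]; -) *)
definition NSinf_algebra :: "('k::field_char_0 \<Rightarrow> 'v::ab_group_add \<Rightarrow> 'v) \<Rightarrow> (int \<Rightarrow> 'v set) \<Rightarrow> (nat \<Rightarrow> nat \<Rightarrow> 'v list \<Rightarrow> 'v) \<Rightarrow> bool" where
  "NSinf_algebra scale G \<eta> \<longleftrightarrow> graded_vs scale G
     \<and> (\<forall>n\<ge>1. \<forall>j\<in>idxset n. graded_map scale G n (int n - 2) (\<eta> n j))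
     \<and> (\<forall>k\<ge>1. \<forall>r\<in>idxset k. \<forall>as ds. length as = k \<and> homog G as ds \<longrightarrow>
          (\<Sum>n\<in>{1..k}. \<Sum>i\<in>{1..k + 1 - n}.
              sgnv (int i * (int n + 1)) (pcomp (k + 1 - n) (\<eta> (k + 1 - n)) n (\<eta> n) i r as ds)) = 0)"

definition etabar :: "(nat \<Rightarrow> nat \<Rightarrow> 'v list \<Rightarrow> 'v) \<Rightarrow> nat \<Rightarrow> 'v list \<Rightarrow> 'v::ab_group_add" where
  "etabar \<eta> n as = (if n = 1 then \<eta> 1 1 as else (\<Sum>j\<in>{1..n + 1}. \<eta> n j as))"

end

theory Submission
  imports Defs
begin

lemma sgnv_add: "sgnv a (x + y) = sgnv a x + sgnv a y"
  by (simp add: sgnv_def)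

lemma sgnv_sum: "sgnv a (sum f S) = (\<Sum>x\<in>S. sgnv a (f x))"
  by (simp add: sgnv_def sum_negf)

lemma sgnv_sgnv: "sgnv a (sgnv b x) = sgnv (a + b) x"
  by (auto simp: sgnv_def)

lemma etabar_idx: "etabar \<eta> n B = (\<Sum>j\<in>idxset n. \<eta> n j B)"
  by (simp add: etabar_def idxset_def)

lemma finite_idxset[simp]: "finite (idxset n)"
  by (simp add: idxset_def)

lemma sum_ev:
  assumes "finite S" "idxset n \<subseteq> S"
  shows "(\<Sum>j\<in>S. ev n g j B) = (\<Sum>j\<in>idxset n. g j B)"
proof -
  have "(\<Sum>j\<in>S. ev n g j B) = (\<Sum>j\<in>S \<inter> idxset n. g j B)"
    unfolding ev_def using assms(1) by (simp add: sum.inter_restrict)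
  also have "S \<inter> idxset n = idxset n" using assms(2) by blast
  finally show ?thesis .
qed

lemma ins_at_upd:
  assumes "i - 1 \<le> length as"
  shows "ins_at as i n x = (ins_at as i n y)[i - 1 := x]"
  using assms by (simp add: ins_at_def list_update_append)

lemma lin_ins:
  assumes md: "module scale" and ml: "multilin scale m F" and len: "length as = k"
    and mn: "m + n = k + 1" and i1: "1 \<le> i" and im: "i \<le> m" and fin: "finite S"
  shows "F (ins_at as i n (\<Sum>s\<in>S. x s)) = (\<Sum>s\<in>S. F (ins_at as i n (x s)))"
proof -
  define L where "L = ins_at as i n 0"
  have lenL: "length L = m" using len mn i1 im by (simp add: L_def ins_at_def)
  have ins: "ins_at as i n y = L[i - 1 := y]" for y
    unfolding L_def using len mn i1 im by (intro ins_at_upd) simp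
  have p: "i - 1 < m" using i1 im by simp
  have add: "F (L[i - 1 := a + b]) = F (L[i - 1 := a]) + F (L[i - 1 := b])" for a b
    using ml lenL p md unfolding multilin_def
    by (metis module.scale_one)
  have zero: "F (L[i - 1 := 0]) = 0"
    using add[of 0 0] by simp
  define q where "q = i - 1"
  have add': "F (L[q := a + b]) = F (L[q := a]) + F (L[q := b])" for a b
    using add unfolding q_def .
  have zero': "F (L[q := 0]) = 0" using zero unfolding q_def .
  have ins': "ins_at as i n y = L[q := y]" for y using ins unfolding q_def .
  show ?thesis using fin unfolding ins'
    by (induction S rule: finite_induct) (simp_all add: zero' add')
qed

lemma key:
  fixes f g :: "nat \<Rightarrow> 'v list \<Rightarrow> 'v::ab_group_add"
  assumes mn: "m + n = k + 1" and n1: "1 \<le> n" and i1: "1 \<le> i" and im: "i \<le> m"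
    and lin: "\<And>(S::nat set) x. finite S \<Longrightarrow> f i (ins_at as i n (\<Sum>s\<in>S. x s)) = (\<Sum>s\<in>S. f i (ins_at as i n (x s)))"
  shows "(\<Sum>r\<in>idxset k. pcomp m f n g i r as ds)
       = sgnv (int n * sum_list (take (i - 1) ds))
           (\<Sum>j\<in>idxset m. f j (ins_at as i n (\<Sum>j\<in>idxset n. g j (block as i n))))"
proof -
  define B where "B = block as i n"
  define gbar where "gbar = (\<Sum>j\<in>idxset n. ev n g j B)"
  define X where "X = ins_at as i n gbar"
  have gbar': "gbar = (\<Sum>j\<in>idxset n. g j B)"
    unfolding gbar_def by (rule sum_ev) auto
  define h where "h r = (if 1 \<le> r \<and> r \<le> i - 1 then ev m f r X
         else if i \<le> r \<and> r \<le> i + n - 1 then ev m f i (ins_at as i n (ev n g (r - i + 1) B))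
         else if i + n \<le> r \<and> r \<le> m + n - 1 then ev m f (r - n + 1) X
         else if r = m + n then ev m f i (ins_at as i n (ev n g (n + 1) B)) + ev m f (m + 1) X
         else 0)" for r
  define c where "c = int n * sum_list (take (i - 1) ds)"
  have pc: "pcomp m f n g i r as ds = sgnv c (h r)" for r
    unfolding pcomp_def Let_def h_def c_def X_def gbar_def B_def ..
  have im': "i \<in> idxset m" using i1 im by (auto simp: idxset_def)
  have evi: "ev m f i y = f i y" for y using im' by (simp add: ev_def)
  have inner: "(\<Sum>r\<in>idxset k. h r) = (\<Sum>j\<in>idxset m. f j X)"
  proof (cases "k = 1")
    case True
    then have "m = 1" "n = 1" "i = 1" using mn n1 i1 im by auto
    then show ?thesis using True
      by (simp add: idxset_def h_def ev_def X_def gbar' B_def)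
  next
    case False
    then have k: "idxset k = {1..<m+n+1}" using mn n1 im by (auto simp: idxset_def)
    have split: "(\<Sum>r\<in>{1..<m+n+1}. h r) = (\<Sum>r\<in>{1..<i}. h r) + (\<Sum>r\<in>{i..<i+n}. h r)
        + (\<Sum>r\<in>{i+n..<m+n}. h r) + h (m+n)"
    proof -
      have "(\<Sum>r\<in>{1..<m+n+1}. h r) = (\<Sum>r\<in>{1..<m+n}. h r) + h (m+n)" using n1 by simp
      also have "(\<Sum>r\<in>{1..<m+n}. h r) = (\<Sum>r\<in>{1..<i+n}. h r) + (\<Sum>r\<in>{i+n..<m+n}. h r)"
        using im i1 by (intro sum.atLeastLessThan_concat[symmetric]) auto
      also have "(\<Sum>r\<in>{1..<i+n}. h r) = (\<Sum>r\<in>{1..<i}. h r) + (\<Sum>r\<in>{i..<i+n}. h r)"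
        using im i1 by (intro sum.atLeastLessThan_concat[symmetric]) auto
      finally show ?thesis .
    qed
    have P1: "(\<Sum>r\<in>{1..<i}. h r) = (\<Sum>r\<in>{1..<i}. ev m f r X)"
      by (rule sum.cong) (auto simp: h_def)
    have P2: "(\<Sum>r\<in>{i..<i+n}. h r) = (\<Sum>s\<in>{1..<n+1}. ev m f i (ins_at as i n (ev n g s B)))"
    proof -
      have "(\<Sum>r\<in>{i..<i+n}. h r) = (\<Sum>r\<in>{i..<i+n}. ev m f i (ins_at as i n (ev n g (r - i + 1) B)))"
        by (rule sum.cong) (auto simp: h_def)
      also have "\<dots> = (\<Sum>s\<in>{1..<n+1}. ev m f i (ins_at as i n (ev n g s B)))"
        using i1 by (intro sum.reindex_bij_witness[of _ "\<lambda>s. s + i - 1" "\<lambda>r. r - i + 1"]) auto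
      finally show ?thesis .
    qed
    have P3: "(\<Sum>r\<in>{i+n..<m+n}. h r) = (\<Sum>j\<in>{i+1..<m+1}. ev m f j X)"
    proof -
      have "(\<Sum>r\<in>{i+n..<m+n}. h r) = (\<Sum>r\<in>{i+n..<m+n}. ev m f (r - n + 1) X)"
        using i1 by (intro sum.cong) (auto simp: h_def)
      also have "\<dots> = (\<Sum>j\<in>{i+1..<m+1}. ev m f j X)"
        using n1 by (intro sum.reindex_bij_witness[of _ "\<lambda>j. j + n - 1" "\<lambda>r. r - n + 1"]) auto
      finally show ?thesis .
    qed
    have P4: "h (m+n) = ev m f i (ins_at as i n (ev n g (n + 1) B)) + ev m f (m + 1) X"
    proof -
      have c1: "\<not> (1 \<le> m + n \<and> m + n \<le> i - 1)" using n1 im i1 by linarith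
      have c2: "\<not> (i \<le> m + n \<and> m + n \<le> i + n - 1)" using n1 im i1 by linarith
      have c3: "\<not> (i + n \<le> m + n \<and> m + n \<le> m + n - 1)" using n1 im i1 by linarith
      show ?thesis unfolding h_def by (simp only: if_not_P[OF c1] if_not_P[OF c2] if_not_P[OF c3] if_True refl)
    qed
    have mid: "(\<Sum>s\<in>{1..<n+1}. ev m f i (ins_at as i n (ev n g s B))) + ev m f i (ins_at as i n (ev n g (n + 1) B))
        = ev m f i X"
    proof -
      have "(\<Sum>s\<in>{1..<n+1}. ev m f i (ins_at as i n (ev n g s B))) + ev m f i (ins_at as i n (ev n g (n + 1) B))
          = (\<Sum>s\<in>{1..<n+2}. f i (ins_at as i n (ev n g s B)))" by (simp add: evi)
      also have "\<dots> = f i (ins_at as i n (\<Sum>s\<in>{1..<n+2}. ev n g s B))"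
        using lin[of "{1..<n+2}" "\<lambda>s. ev n g s B"] by simp
      also have "(\<Sum>s\<in>{1..<n+2}. ev n g s B) = gbar"
        unfolding gbar' by (rule sum_ev) (auto simp: idxset_def)
      finally show ?thesis by (simp add: evi X_def)
    qed
    have "(\<Sum>r\<in>idxset k. h r) = (\<Sum>r\<in>{1..<i}. ev m f r X) + ev m f i X + (\<Sum>j\<in>{i+1..<m+1}. ev m f j X) + ev m f (m + 1) X"
      unfolding k split P1 P2 P3 P4 using mid by (simp add: algebra_simps)
    also have "\<dots> = (\<Sum>j\<in>{1..<m+2}. ev m f j X)"
    proof -
      have a: "(\<Sum>r\<in>{1..<i}. ev m f r X) + ev m f i X = (\<Sum>r\<in>{1..<i+1}. ev m f r X)"
        using i1 by simp
      have b: "(\<Sum>r\<in>{1..<i+1}. ev m f r X) + (\<Sum>j\<in>{i+1..<m+1}. ev m f j X) = (\<Sum>r\<in>{1..<m+1}. ev m f r X)"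
        using im by (intro sum.atLeastLessThan_concat) auto
      show ?thesis unfolding a b by simp
    qed
    also have "\<dots> = (\<Sum>j\<in>idxset m. f j X)"
      by (rule sum_ev) (auto simp: idxset_def)
    finally show ?thesis .
  qed
  show ?thesis
    unfolding pc sgnv_sum[symmetric] inner c_def X_def gbar' B_def ..
qed

lemma G_sum:
  assumes gv: "graded_vs scale G" and fin: "finite J"
  shows "(\<forall>j\<in>J. x j \<in> G d) \<Longrightarrow> (\<Sum>j\<in>J. x j) \<in> G d"
  using fin
proof (induction J rule: finite_induct)
  case empty then show ?case using gv by (simp add: graded_vs_def)
next
  case (insert a J) then show ?case using gv by (simp add: graded_vs_def)
qed

lemma graded_map_sum:
  fixes scale :: "'k::field_char_0 \<Rightarrow> 'v::ab_group_add \<Rightarrow> 'v"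
    and F :: "'a \<Rightarrow> 'v list \<Rightarrow> 'v"
  assumes gv: "graded_vs scale G" and fin: "finite J"
    and gm: "\<forall>j\<in>J. graded_map scale G n s (F j)"
  shows "graded_map scale G n s (\<lambda>B. \<Sum>j\<in>J. F j B)"
proof -
  have md: "module scale" using gv by (simp add: graded_vs_def)
  have "multilin scale n (\<lambda>B. \<Sum>j\<in>J. F j B)"
    unfolding multilin_def
  proof (intro allI impI)
    fix as :: "'v list" and p :: nat and c :: 'k and x y :: 'v
    assume a: "length as = n \<and> p < n"
    have "(\<Sum>j\<in>J. F j (as[p := scale c x + y])) = (\<Sum>j\<in>J. scale c (F j (as[p := x])) + F j (as[p := y]))"
      using gm a by (intro sum.cong) (auto simp: graded_map_def multilin_def)
    also have "\<dots> = scale c (\<Sum>j\<in>J. F j (as[p := x])) + (\<Sum>j\<in>J. F j (as[p := y]))"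
      by (simp add: sum.distrib module.scale_sum_right[OF md])
    finally show "(\<Sum>j\<in>J. F j (as[p := scale c x + y])) = scale c (\<Sum>j\<in>J. F j (as[p := x])) + (\<Sum>j\<in>J. F j (as[p := y]))" .
  qed
  moreover have "\<forall>as ds. length as = n \<and> homog G as ds \<longrightarrow> (\<Sum>j\<in>J. F j as) \<in> G (sum_list ds + s)"
    using gm by (auto simp: graded_map_def intro!: G_sum[OF gv fin])
  ultimately show ?thesis by (simp add: graded_map_def)
qed

theorem proposition6p13:
  fixes scale :: "'k::field_char_0 \<Rightarrow> 'v::ab_group_add \<Rightarrow> 'v"
    and G :: "int \<Rightarrow> 'v set"
    and \<eta> :: "nat \<Rightarrow> nat \<Rightarrow> 'v list \<Rightarrow> 'v"
  assumes "NSinf_algebra scale G \<eta>"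
  shows "Ainf_algebra scale G (etabar \<eta>)"
proof -
  have gv: "graded_vs scale G"
    and gm: "\<And>n j. n \<ge> 1 \<Longrightarrow> j \<in> idxset n \<Longrightarrow> graded_map scale G n (int n - 2) (\<eta> n j)"
    and rel: "\<And>k r as ds. k \<ge> 1 \<Longrightarrow> r \<in> idxset k \<Longrightarrow> length as = k \<Longrightarrow> homog G as ds \<Longrightarrow>
          (\<Sum>n\<in>{1..k}. \<Sum>i\<in>{1..k + 1 - n}.
              sgnv (int i * (int n + 1)) (pcomp (k + 1 - n) (\<eta> (k + 1 - n)) n (\<eta> n) i r as ds)) = 0"
    using assms unfolding NSinf_algebra_def by blast+
  have md: "module scale" using gv by (simp add: graded_vs_def)
  have eb: "etabar \<eta> n = (\<lambda>B. \<Sum>j\<in>idxset n. \<eta> n j B)" for n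
    by (rule ext) (rule etabar_idx)
  have gmb: "graded_map scale G n (int n - 2) (etabar \<eta> n)" if "n \<ge> 1" for n
    unfolding eb using gm[OF that] by (intro graded_map_sum[OF gv]) auto
  have main: "(\<Sum>n\<in>{1..k}. \<Sum>i\<in>{1..k + 1 - n}.
              sgnv (int i * (int n + 1) + int n * sum_list (take (i - 1) ds))
                (etabar \<eta> (k + 1 - n) (ins_at as i n (etabar \<eta> n (block as i n))))) = 0"
    if k1: "k \<ge> 1" and len: "length as = k" and hg: "homog G as ds" for k as ds
  proof -
    have step: "(\<Sum>r\<in>idxset k. pcomp (k + 1 - n) (\<eta> (k + 1 - n)) n (\<eta> n) i r as ds)
        = sgnv (int n * sum_list (take (i - 1) ds))
            (etabar \<eta> (k + 1 - n) (ins_at as i n (etabar \<eta> n (block as i n))))"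
      if n: "n \<in> {1..k}" and i: "i \<in> {1..k + 1 - n}" for n i
    proof -
      have ii: "i \<in> idxset (k + 1 - n)" using n i by (auto simp: idxset_def)
      have ml: "multilin scale (k + 1 - n) (\<eta> (k + 1 - n) i)"
        using gm[OF _ ii] n i by (auto simp: graded_map_def)
      show ?thesis unfolding etabar_idx
        apply (rule key)
        using n i apply auto[4]
        by (rule lin_ins[OF md ml len]) (use n i in auto)
    qed
    have "0 = (\<Sum>r\<in>idxset k. (\<Sum>n\<in>{1..k}. \<Sum>i\<in>{1..k + 1 - n}.
              sgnv (int i * (int n + 1)) (pcomp (k + 1 - n) (\<eta> (k + 1 - n)) n (\<eta> n) i r as ds)))"
      using rel[OF k1 _ len hg] by simp
    also have "\<dots> = (\<Sum>n\<in>{1..k}. \<Sum>i\<in>{1..k + 1 - n}.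
              sgnv (int i * (int n + 1)) (\<Sum>r\<in>idxset k. pcomp (k + 1 - n) (\<eta> (k + 1 - n)) n (\<eta> n) i r as ds))"
      unfolding sgnv_sum
      by (subst sum.swap) (simp add: sum.swap[of _ "idxset k"])
    also have "\<dots> = (\<Sum>n\<in>{1..k}. \<Sum>i\<in>{1..k + 1 - n}.
              sgnv (int i * (int n + 1) + int n * sum_list (take (i - 1) ds))
                (etabar \<eta> (k + 1 - n) (ins_at as i n (etabar \<eta> n (block as i n)))))"
    proof (intro sum.cong refl)
      fix n i assume n: "n \<in> {1..k}" and i: "i \<in> {1..k + 1 - n}"
      show "sgnv (int i * (int n + 1)) (\<Sum>r\<in>idxset k. pcomp (k + 1 - n) (\<eta> (k + 1 - n)) n (\<eta> n) i r as ds)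
          = sgnv (int i * (int n + 1) + int n * sum_list (take (i - 1) ds))
                (etabar \<eta> (k + 1 - n) (ins_at as i n (etabar \<eta> n (block as i n))))"
        unfolding step[OF n i] sgnv_sgnv ..
    qed
    finally show ?thesis by simp
  qed
  show ?thesis
    unfolding Ainf_algebra_def using gv gmb main by blast
qed

end
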